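(* Let $A=\langle V,\textit{val}_0,\delta\rangle$ be an arena over disjoint finite Boolean sets $\mathbb{E},\mathbb{C}$, let $Pr\subseteq Pred(V)$ and $\mathbb{E}'\supseteq\mathbb{E}$ be finite, and let $M$ be an abstract counterstrategy, i.e. a Moore machine with input $2^{\mathbb{C}}$ and output $2^{\mathbb{E}'\cup Pr}$. Then $M$ is concretisable w.r.t. $A$ if and only if every trace $t\in L(M)$ is concretisable in $A$.
   Context: Theory setting: fix a first-order theory with constants $\mathcal{C}$. For finite $V$, $\mathcal{T}(V)$ are terms over $V$; $V_{prev}=\{v_{prev}\}$ fresh copies. State predicates: predicates over $\mathcal{T}(V)$; transition predicates: over $\mathcal{T}(V\cup V_{prev})$; $Pred(V)$ their union. Valuations $V\to\mathcal{C}$ form $\textit{Val}(V)$. Updates $U:V\to\mathcal{T}(V)$ act by $U(\textit{val})(v)=$ value of $U(v)$ under $\textit{val}$. $\textit{val}\models s$: $\textit{val}$ is a model of state predicate $s$; $(\textit{val},\textit{val}')\models t$: $\textit{val}_{prev}\cup\textit{val}'$ is a model of $t$, with $\textit{val}_{prev}(v_{prev})=\textit{val}(v)$. A valuation not assigning all variables of a formula does not satisfy it. For $S\subseteq T$, $\bigwedge\!\!\bigwedge_T S:=\bigwedge S\wedge\bigwedge_{s\in T\setminus S}\neg s$. Arena $A=\langle V,\textit{val}_0,\delta\rangle$: $\delta$ is a finite-domain partial function from Boolean combinations of $\mathbb{E}\cup\mathbb{C}\cup Pred(V)$ to updates with, for each $\textit{val}$, $E\subseteq\mathbb{E}$, $C\subseteq\mathbb{C}$,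 exactly one $f\in dom(\delta)$ with $(\textit{val},E\cup C)\models f$; $\delta(\textit{val},E\cup C):=\delta(f)(\textit{val})$. $L(A)$: words $w\in(\textit{Val}(V)\times2^{\mathbb{E}\cup\mathbb{C}})^\omega$ with $w(0)=(\textit{val}_0,\cdot)$ and $\textit{val}_{i+1}=\delta(\textit{val}_i,E_i\cup C_i)$, where $w(i)=(\textit{val}_i,E_i\cup C_i)$. An abstract word $a\in(2^{\mathbb{E}'\cup\mathbb{C}\cup Pr})^\omega$ abstracts $w$ if for all $i$, with $a(i)=E_i\cup C_i\cup Pr_i$, $w(i)=(\textit{val}_i,(E_i\cap\mathbb{E})\cup C_i)$, $\textit{val}_0\models\bigwedge\!\!\bigwedge_{Pr}Pr_0$, and $(\textit{val}_{i-1},\textit{val}_i)\models\bigwedge\!\!\bigwedge_{Pr}Pr_i$ for $i>0$; $\gamma(a)$ is the set of such $w$; $a$ is concretisable in $A$ if $L(A)\cap\gamma(a)\neq\emptyset$. Moore machine $M=\langle S,s_0,2^{\mathbb{C}},2^{\mathbb{E}'\cup Pr},\rightarrow,out\rangle$ with total deterministic $\rightarrow:S\times2^{\mathbb{C}}\to S$; a run produces the word $(C_i\cup out(s_i))_i$ where $s_{i+1}$ is the $C_i$-successor of $s_i$; $L(M)$ is the set of these traces. Concretisability of $M$: let $\preceq_A\subseteq\textit{Val}(V)\times S$ be the largest relation such that whenever $\textit{val}\preceq_A s$ with $out(s)=E\cup ST\cup TR$ ($E\subseteq\mathbb{E}'$, $ST$ state predicates, $TR$ transition predicates): (1) $\textit{val}\models\bigwedge\!\!\bigwedge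 ST$ (w.r.t. the state predicates of $Pr$); (2) for every $C\subseteq\mathbb{C}$, with $\textit{val}_C=\delta(\textit{val},(E\cap\mathbb{E})\cup C)$, $s_C$ the $C$-successor of $s$, $TR_C$ the transition predicates in $out(s_C)$: (a) $(\textit{val},\textit{val}_C)\models\bigwedge\!\!\bigwedge TR_C$ (w.r.t. the transition predicates of $Pr$) and (b) $\textit{val}_C\preceq_A s_C$. $M$ is concretisable w.r.t. $A$ if $\textit{val}_0\preceq_A s_0$.
   Formalization: In the definition of abstracts, the condition at position 0 is that $\textit{val}_0$ satisfies exactly the state predicates of $Pr_0$ among the state predicates of Pr, transition predicates in $Pr_0$ being ignored, instead of $\textit{val}_0\models\bigwedge\!\!\bigwedge_{Pr}Pr_0$. The statement above fails without it. *)

theory Defs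
  imports Main
begin

text \<open>Variables V are a finite type 'v, the constants of the theory are a type 'd;
  valuations are total maps 'v => 'd.  A predicate is represented semantically by
  its set of models: a state predicate by a test on a valuation of V, a transition
  predicate by a test on the pair (previous valuation, current valuation), i.e.
  on a valuation of V_prev union V.\<close>

datatype ('v, 'd) pred =
    SPred "('v \<Rightarrow> 'd) \<Rightarrow> bool"
  | TPred "('v \<Rightarrow> 'd) \<Rightarrow> ('v \<Rightarrow> 'd) \<Rightarrow> bool"

definition is_state_pred :: "('v, 'd) pred \<Rightarrow> bool" where
  "is_state_pred p = (case p of SPred _ \<Rightarrow> True | TPred _ \<Rightarrow> False)"

definition is_trans_pred :: "('v, 'd) pred \<Rightarrow> bool" where
  "is_trans_pred p = (\<not> is_state_pred p)"

fun sat_state :: "('v \<Rightarrow> 'd) \<Rightarrow> ('v, 'd) pred \<Rightarrow> bool" where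
  "sat_state val (SPred s) = s val"
| "sat_state val (TPred t) = False"

text \<open>(val, val') |= p : the valuation val_prev union val' is a model of p
  (a state predicate only mentions V, hence is evaluated on val')\<close>
fun sat_trans :: "('v \<Rightarrow> 'd) \<Rightarrow> ('v \<Rightarrow> 'd) \<Rightarrow> ('v, 'd) pred \<Rightarrow> bool" where
  "sat_trans val val' (SPred s) = s val'"
| "sat_trans val val' (TPred t) = t val val'"

definition bigwedge :: "('p \<Rightarrow> bool) \<Rightarrow> 'p set \<Rightarrow> 'p set \<Rightarrow> bool" where
  "bigwedge sat T S = ((\<forall>p\<in>S. sat p) \<and> (\<forall>p\<in>T - S. \<not> sat p))"

text \<open>An update U : V -> T(V), each term represented by its evaluation function.\<close>
type_synonym ('v, 'd) update = "'v \<Rightarrow> ('v \<Rightarrow> 'd) \<Rightarrow> 'd"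

definition apply_upd :: "('v, 'd) update \<Rightarrow> ('v \<Rightarrow> 'd) \<Rightarrow> ('v \<Rightarrow> 'd)" where
  "apply_upd U val = (\<lambda>v. U v val)"

datatype ('e, 'c, 'v, 'd) guard =
    GTrue
  | GEnv 'e
  | GCon 'c
  | GPred "('v \<Rightarrow> 'd) \<Rightarrow> bool"
  | GNot "('e, 'c, 'v, 'd) guard"
  | GAnd "('e, 'c, 'v, 'd) guard" "('e, 'c, 'v, 'd) guard"
  | GOr "('e, 'c, 'v, 'd) guard" "('e, 'c, 'v, 'd) guard"

fun gsat :: "('v \<Rightarrow> 'd) \<Rightarrow> 'e set \<Rightarrow> 'c set \<Rightarrow> ('e, 'c, 'v, 'd) guard \<Rightarrow> bool" where
  "gsat val E C GTrue = True"
| "gsat val E C (GEnv e) = (e \<in> E)"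
| "gsat val E C (GCon c) = (c \<in> C)"
| "gsat val E C (GPred s) = s val"
| "gsat val E C (GNot f) = (\<not> gsat val E C f)"
| "gsat val E C (GAnd f g) = (gsat val E C f \<and> gsat val E C g)"
| "gsat val E C (GOr f g) = (gsat val E C f \<or> gsat val E C g)"

fun genv_atoms :: "('e, 'c, 'v, 'd) guard \<Rightarrow> 'e set" where
  "genv_atoms GTrue = {}"
| "genv_atoms (GEnv e) = {e}"
| "genv_atoms (GCon c) = {}"
| "genv_atoms (GPred s) = {}"
| "genv_atoms (GNot f) = genv_atoms f"
| "genv_atoms (GAnd f g) = genv_atoms f \<union> genv_atoms g"
| "genv_atoms (GOr f g) = genv_atoms f \<union> genv_atoms g"

fun gcon_atoms :: "('e, 'c, 'v, 'd) guard \<Rightarrow> 'c set" where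
  "gcon_atoms GTrue = {}"
| "gcon_atoms (GEnv e) = {}"
| "gcon_atoms (GCon c) = {c}"
| "gcon_atoms (GPred s) = {}"
| "gcon_atoms (GNot f) = gcon_atoms f"
| "gcon_atoms (GAnd f g) = gcon_atoms f \<union> gcon_atoms g"
| "gcon_atoms (GOr f g) = gcon_atoms f \<union> gcon_atoms g"

text \<open>An arena <V, val_0, delta> over the finite sets EE (environment) and CC
  (controller); V is the finite type 'v, val_0 is a separate parameter.\<close>
definition is_arena ::
  "'e set \<Rightarrow> 'c set \<Rightarrow> (('e, 'c, 'v, 'd) guard \<rightharpoonup> ('v, 'd) update) \<Rightarrow> bool" where
  "is_arena EE CC \<delta> \<longleftrightarrow>
     finite EE \<and> finite CC \<and> finite (dom \<delta>) \<and>
     (\<forall>f\<in>dom \<delta>. genv_atoms f \<subseteq> EE \<and> gcon_atoms f \<subseteq> CC) \<and>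
     (\<forall>val E C. E \<subseteq> EE \<longrightarrow> C \<subseteq> CC \<longrightarrow> (\<exists>!f. f \<in> dom \<delta> \<and> gsat val E C f))"

definition delta_app ::
  "(('e, 'c, 'v, 'd) guard \<rightharpoonup> ('v, 'd) update) \<Rightarrow> ('v \<Rightarrow> 'd) \<Rightarrow> 'e set \<Rightarrow> 'c set \<Rightarrow> ('v \<Rightarrow> 'd)" where
  "delta_app \<delta> val E C =
     apply_upd (the (\<delta> (THE f. f \<in> dom \<delta> \<and> gsat val E C f))) val"

text \<open>L(A): concrete words, letter i = (val_i, E_i, C_i) standing for (val_i, E_i u C_i)\<close>
definition arena_lang ::
  "'e set \<Rightarrow> 'c set \<Rightarrow> ('v \<Rightarrow> 'd) \<Rightarrow> (('e, 'c, 'v, 'd) guard \<rightharpoonup> ('v, 'd) update)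
   \<Rightarrow> (nat \<Rightarrow> ('v \<Rightarrow> 'd) \<times> 'e set \<times> 'c set) set" where
  "arena_lang EE CC val0 \<delta> =
     {w. (\<forall>i. fst (snd (w i)) \<subseteq> EE \<and> snd (snd (w i)) \<subseteq> CC) \<and>
         fst (w 0) = val0 \<and>
         (\<forall>i. fst (w (Suc i)) = delta_app \<delta> (fst (w i)) (fst (snd (w i))) (snd (snd (w i))))}"

text \<open>Abstract letter i = (E_i, C_i, Pr_i) standing for E_i u C_i u Pr_i.
  At position 0 only the state predicates of Pr are taken into account
  (val_0 assigns no previous-state variables).\<close>
definition abstracts ::
  "'e set \<Rightarrow> ('v, 'd) pred set \<Rightarrow> (nat \<Rightarrow> 'e set \<times> 'c set \<times> ('v, 'd) pred set)
   \<Rightarrow> (nat \<Rightarrow> ('v \<Rightarrow> 'd) \<times> 'e set \<times> 'c set) \<Rightarrow> bool" where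
  "abstracts EE Pr a w \<longleftrightarrow>
     (\<forall>i. snd (w i) = (fst (a i) \<inter> EE, fst (snd (a i)))) \<and>
     bigwedge (sat_state (fst (w 0))) {p\<in>Pr. is_state_pred p}
              {p\<in>snd (snd (a 0)). is_state_pred p} \<and>
     (\<forall>i>0. bigwedge (sat_trans (fst (w (i - 1))) (fst (w i))) Pr (snd (snd (a i))))"

definition gamma ::
  "'e set \<Rightarrow> ('v, 'd) pred set \<Rightarrow> (nat \<Rightarrow> 'e set \<times> 'c set \<times> ('v, 'd) pred set)
   \<Rightarrow> (nat \<Rightarrow> ('v \<Rightarrow> 'd) \<times> 'e set \<times> 'c set) set" where
  "gamma EE Pr a = {w. abstracts EE Pr a w}"

definition concretisable_word ::
  "'e set \<Rightarrow> 'c set \<Rightarrow> ('v, 'd) pred set \<Rightarrow> ('v \<Rightarrow> 'd)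
   \<Rightarrow> (('e, 'c, 'v, 'd) guard \<rightharpoonup> ('v, 'd) update)
   \<Rightarrow> (nat \<Rightarrow> 'e set \<times> 'c set \<times> ('v, 'd) pred set) \<Rightarrow> bool" where
  "concretisable_word EE CC Pr val0 \<delta> a \<longleftrightarrow> arena_lang EE CC val0 \<delta> \<inter> gamma EE Pr a \<noteq> {}"

text \<open>Moore machine <S, s0, 2^CC, 2^(EE' u Pr), tr, out>; out s = (E, P) stands
  for the output E u P with E \<subseteq> EE', P \<subseteq> Pr.\<close>
definition is_moore ::
  "'c set \<Rightarrow> 'e set \<Rightarrow> ('v, 'd) pred set \<Rightarrow> 's set \<Rightarrow> 's \<Rightarrow> ('s \<Rightarrow> 'c set \<Rightarrow> 's)
   \<Rightarrow> ('s \<Rightarrow> 'e set \<times> ('v, 'd) pred set) \<Rightarrow> bool" where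
  "is_moore CC EE' Pr S s0 tr out \<longleftrightarrow>
     s0 \<in> S \<and>
     (\<forall>s\<in>S. \<forall>C. C \<subseteq> CC \<longrightarrow> tr s C \<in> S) \<and>
     (\<forall>s\<in>S. fst (out s) \<subseteq> EE' \<and> snd (out s) \<subseteq> Pr)"

fun moore_run :: "'s \<Rightarrow> ('s \<Rightarrow> 'c set \<Rightarrow> 's) \<Rightarrow> (nat \<Rightarrow> 'c set) \<Rightarrow> nat \<Rightarrow> 's" where
  "moore_run s0 tr Cs 0 = s0"
| "moore_run s0 tr Cs (Suc i) = tr (moore_run s0 tr Cs i) (Cs i)"

definition moore_lang ::
  "'c set \<Rightarrow> 's \<Rightarrow> ('s \<Rightarrow> 'c set \<Rightarrow> 's) \<Rightarrow> ('s \<Rightarrow> 'e set \<times> ('v, 'd) pred set)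
   \<Rightarrow> (nat \<Rightarrow> 'e set \<times> 'c set \<times> ('v, 'd) pred set) set" where
  "moore_lang CC s0 tr out =
     {(\<lambda>i. (fst (out (moore_run s0 tr Cs i)), Cs i, snd (out (moore_run s0 tr Cs i))))
      | Cs. \<forall>i. Cs i \<subseteq> CC}"

text \<open>R satisfies the defining (post-fixed point) conditions of the relation preceq_A.\<close>
definition conc_rel ::
  "'e set \<Rightarrow> 'c set \<Rightarrow> ('v, 'd) pred set \<Rightarrow> (('e, 'c, 'v, 'd) guard \<rightharpoonup> ('v, 'd) update)
   \<Rightarrow> 's set \<Rightarrow> ('s \<Rightarrow> 'c set \<Rightarrow> 's) \<Rightarrow> ('s \<Rightarrow> 'e set \<times> ('v, 'd) pred set)
   \<Rightarrow> (('v \<Rightarrow> 'd) \<times> 's) set \<Rightarrow> bool" where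
  "conc_rel EE CC Pr \<delta> S tr out R \<longleftrightarrow>
     (\<forall>(val, s)\<in>R. s \<in> S \<and>
        bigwedge (sat_state val) {p\<in>Pr. is_state_pred p}
                 {p\<in>snd (out s). is_state_pred p} \<and>
        (\<forall>C. C \<subseteq> CC \<longrightarrow>
           (let valC = delta_app \<delta> val (fst (out s) \<inter> EE) C; sC = tr s C in
              bigwedge (sat_trans val valC) {p\<in>Pr. is_trans_pred p}
                       {p\<in>snd (out sC). is_trans_pred p} \<and>
              (valC, sC) \<in> R)))"

definition conc_preceq ::
  "'e set \<Rightarrow> 'c set \<Rightarrow> ('v, 'd) pred set \<Rightarrow> (('e, 'c, 'v, 'd) guard \<rightharpoonup> ('v, 'd) update)
   \<Rightarrow> 's set \<Rightarrow> ('s \<Rightarrow> 'c set \<Rightarrow> 's) \<Rightarrow> ('s \<Rightarrow> 'e set \<times> ('v, 'd) pred set)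
   \<Rightarrow> (('v \<Rightarrow> 'd) \<times> 's) set" where
  "conc_preceq EE CC Pr \<delta> S tr out = \<Union> {R. conc_rel EE CC Pr \<delta> S tr out R}"

definition moore_concretisable ::
  "'e set \<Rightarrow> 'c set \<Rightarrow> ('v, 'd) pred set \<Rightarrow> ('v \<Rightarrow> 'd)
   \<Rightarrow> (('e, 'c, 'v, 'd) guard \<rightharpoonup> ('v, 'd) update)
   \<Rightarrow> 's set \<Rightarrow> 's \<Rightarrow> ('s \<Rightarrow> 'c set \<Rightarrow> 's) \<Rightarrow> ('s \<Rightarrow> 'e set \<times> ('v, 'd) pred set) \<Rightarrow> bool" where
  "moore_concretisable EE CC Pr val0 \<delta> S s0 tr out \<longleftrightarrow>
     (val0, s0) \<in> conc_preceq EE CC Pr \<delta> S tr out"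

end

theory Submission
  imports Defs
begin

fun vrun where
  "vrun EE \<delta> s0 tr out val0 Cs 0 = val0"
| "vrun EE \<delta> s0 tr out val0 Cs (Suc i) =
     delta_app \<delta> (vrun EE \<delta> s0 tr out val0 Cs i)
       (fst (out (moore_run s0 tr Cs i)) \<inter> EE) (Cs i)"

lemma sat_trans_state: "is_state_pred p \<Longrightarrow> sat_trans v v' p = sat_state v' p"
  by (cases p) (auto simp: is_state_pred_def)

lemma bw_split:
  "bigwedge (sat_trans v v') Pr P \<longleftrightarrow>
   bigwedge (sat_state v') {p\<in>Pr. is_state_pred p} {p\<in>P. is_state_pred p} \<and>
   bigwedge (sat_trans v v') {p\<in>Pr. is_trans_pred p} {p\<in>P. is_trans_pred p}"
  unfolding bigwedge_def is_trans_pred_def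
  using sat_trans_state by blast

lemma agree:
  "(\<forall>j<n. Cs j = Cs' j) \<Longrightarrow>
   vrun EE \<delta> s0 tr out val0 Cs n = vrun EE \<delta> s0 tr out val0 Cs' n \<and>
   moore_run s0 tr Cs n = moore_run s0 tr Cs' n"
  by (induction n) auto

lemma run_in_S:
  assumes "is_moore CC EE' Pr S s0 tr out" "\<forall>i. Cs i \<subseteq> CC"
  shows "moore_run s0 tr Cs n \<in> S"
  using assms by (induction n) (auto simp: is_moore_def)

lemma good:
  assumes "\<forall>t\<in>moore_lang CC s0 tr out. concretisable_word EE CC Pr val0 \<delta> t"
    and "\<forall>i. Cs i \<subseteq> CC"
  shows "bigwedge (sat_state (vrun EE \<delta> s0 tr out val0 Cs i)) {p\<in>Pr. is_state_pred p}
            {p\<in>snd (out (moore_run s0 tr Cs i)). is_state_pred p}"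
    and "bigwedge (sat_trans (vrun EE \<delta> s0 tr out val0 Cs i) (vrun EE \<delta> s0 tr out val0 Cs (Suc i)))
            {p\<in>Pr. is_trans_pred p}
            {p\<in>snd (out (moore_run s0 tr Cs (Suc i))). is_trans_pred p}"
proof -
  let ?t = "\<lambda>i. (fst (out (moore_run s0 tr Cs i)), Cs i, snd (out (moore_run s0 tr Cs i)))"
  have "?t \<in> moore_lang CC s0 tr out" unfolding moore_lang_def using assms(2) by blast
  with assms(1) obtain w where w: "w \<in> arena_lang EE CC val0 \<delta>" "abstracts EE Pr ?t w"
    unfolding concretisable_word_def gamma_def by blast
  have fw: "fst (w n) = vrun EE \<delta> s0 tr out val0 Cs n" for n
  proof (induction n)
    case 0 then show ?case using w(1) by (simp add: arena_lang_def)
  next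
    case (Suc n)
    have "fst (w (Suc n)) = delta_app \<delta> (fst (w n)) (fst (snd (w n))) (snd (snd (w n)))"
      using w(1) by (simp add: arena_lang_def)
    moreover have "snd (w n) = (fst (out (moore_run s0 tr Cs n)) \<inter> EE, Cs n)"
      using w(2) by (simp add: abstracts_def)
    ultimately show ?case using Suc by simp
  qed
  have tr: "bigwedge (sat_trans (vrun EE \<delta> s0 tr out val0 Cs i) (vrun EE \<delta> s0 tr out val0 Cs (Suc i)))
            Pr (snd (out (moore_run s0 tr Cs (Suc i))))"
    using w(2) fw unfolding abstracts_def
    by (metis (no_types, lifting) diff_Suc_1 snd_conv zero_less_Suc)
  show "bigwedge (sat_trans (vrun EE \<delta> s0 tr out val0 Cs i) (vrun EE \<delta> s0 tr out val0 Cs (Suc i)))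
            {p\<in>Pr. is_trans_pred p}
            {p\<in>snd (out (moore_run s0 tr Cs (Suc i))). is_trans_pred p}"
    using tr bw_split by blast
  show "bigwedge (sat_state (vrun EE \<delta> s0 tr out val0 Cs i)) {p\<in>Pr. is_state_pred p}
            {p\<in>snd (out (moore_run s0 tr Cs i)). is_state_pred p}"
  proof (cases i)
    case 0
    then show ?thesis using w(2) fw unfolding abstracts_def by (metis snd_conv)
  next
    case (Suc j)
    have "bigwedge (sat_trans (vrun EE \<delta> s0 tr out val0 Cs j) (vrun EE \<delta> s0 tr out val0 Cs (Suc j)))
            Pr (snd (out (moore_run s0 tr Cs (Suc j))))"
      using w(2) fw unfolding abstracts_def
      by (metis (no_types, lifting) diff_Suc_1 snd_conv zero_less_Suc)
    then show ?thesis using Suc bw_split by blast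
  qed
qed

theorem mainTheorem3:
  fixes EE EE' :: "'e set" and CC :: "'c set"
    and val0 :: "'v::finite \<Rightarrow> 'd"
    and \<delta> :: "('e, 'c, 'v, 'd) guard \<rightharpoonup> ('v, 'd) update"
    and Pr :: "('v, 'd) pred set"
    and S :: "'s set" and s0 :: 's and tr :: "'s \<Rightarrow> 'c set \<Rightarrow> 's"
    and out :: "'s \<Rightarrow> 'e set \<times> ('v, 'd) pred set"
  assumes "is_arena EE CC \<delta>"
    and "finite Pr" and "finite EE'" and "EE \<subseteq> EE'"
    and "is_moore CC EE' Pr S s0 tr out"
  shows "moore_concretisable EE CC Pr val0 \<delta> S s0 tr out \<longleftrightarrow>
         (\<forall>t\<in>moore_lang CC s0 tr out. concretisable_word EE CC Pr val0 \<delta> t)"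
proof
  assume "moore_concretisable EE CC Pr val0 \<delta> S s0 tr out"
  then obtain R where R: "conc_rel EE CC Pr \<delta> S tr out R" "(val0, s0) \<in> R"
    unfolding moore_concretisable_def conc_preceq_def by blast
  show "\<forall>t\<in>moore_lang CC s0 tr out. concretisable_word EE CC Pr val0 \<delta> t"
  proof
    fix t assume "t \<in> moore_lang CC s0 tr out"
    then obtain Cs where Cs: "\<forall>i. Cs i \<subseteq> CC"
      and t: "t = (\<lambda>i. (fst (out (moore_run s0 tr Cs i)), Cs i, snd (out (moore_run s0 tr Cs i))))"
      unfolding moore_lang_def by blast
    let ?v = "vrun EE \<delta> s0 tr out val0 Cs"
    let ?m = "moore_run s0 tr Cs"
    have inR: "(?v i, ?m i) \<in> R" for i
    proof (induction i)
      case 0 then show ?case using R(2) by simp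
    next
      case (Suc i)
      then show ?case using R(1) Cs unfolding conc_rel_def Let_def by fastforce
    qed
    have st: "bigwedge (sat_state (?v i)) {p\<in>Pr. is_state_pred p}
            {p\<in>snd (out (?m i)). is_state_pred p}" for i
      using inR[of i] R(1) unfolding conc_rel_def by fastforce
    have trn: "bigwedge (sat_trans (?v i) (?v (Suc i))) {p\<in>Pr. is_trans_pred p}
            {p\<in>snd (out (?m (Suc i))). is_trans_pred p}" for i
      using inR[of i] R(1) Cs unfolding conc_rel_def Let_def by fastforce
    let ?w = "\<lambda>i. (?v i, fst (out (?m i)) \<inter> EE, Cs i)"
    have "?w \<in> arena_lang EE CC val0 \<delta>" using Cs by (simp add: arena_lang_def)
    moreover have "abstracts EE Pr t ?w"
    proof -
      have "bigwedge (sat_trans (?v (i - 1)) (?v i)) Pr (snd (out (?m i)))" if "i > 0" for i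
      proof -
        obtain j where j: "i = Suc j" using \<open>i > 0\<close> gr0_implies_Suc by blast
        show ?thesis using iffD2[OF bw_split, OF conjI[OF st[of "Suc j"] trn[of j]]] j by simp
      qed
      then show ?thesis unfolding abstracts_def t using st[of 0] by simp
    qed
    ultimately show "concretisable_word EE CC Pr val0 \<delta> t"
      unfolding concretisable_word_def gamma_def by blast
  qed
next
  assume H: "\<forall>t\<in>moore_lang CC s0 tr out. concretisable_word EE CC Pr val0 \<delta> t"
  define R where "R = {(vrun EE \<delta> s0 tr out val0 Cs n, moore_run s0 tr Cs n) | Cs n. \<forall>i. Cs i \<subseteq> CC}"
  have "conc_rel EE CC Pr \<delta> S tr out R"
    unfolding conc_rel_def
  proof (intro ballI, clarify)
    fix val s assume "(val, s) \<in> R"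
    then obtain Cs n where Cs: "\<forall>i. Cs i \<subseteq> CC" and val: "val = vrun EE \<delta> s0 tr out val0 Cs n"
      and s: "s = moore_run s0 tr Cs n"
      unfolding R_def by blast
    have sS: "s \<in> S" using run_in_S[OF assms(5) Cs] s by blast
    have st: "bigwedge (sat_state val) {p\<in>Pr. is_state_pred p} {p\<in>snd (out s). is_state_pred p}"
      using good(1)[OF H Cs] val s by blast
    have rest: "let valC = delta_app \<delta> val (fst (out s) \<inter> EE) C; sC = tr s C in
              bigwedge (sat_trans val valC) {p\<in>Pr. is_trans_pred p}
                       {p\<in>snd (out sC). is_trans_pred p} \<and>
              (valC, sC) \<in> R" if C: "C \<subseteq> CC" for C
    proof -
      define Cs' where "Cs' = Cs(n := C)"
      have Cs': "\<forall>i. Cs' i \<subseteq> CC" using Cs C by (simp add: Cs'_def)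
      have ag: "vrun EE \<delta> s0 tr out val0 Cs' n = val" "moore_run s0 tr Cs' n = s"
      proof -
        have "\<forall>j<n. Cs j = Cs' j" by (simp add: Cs'_def)
        from agree[OF this, of EE \<delta> s0 tr out val0]
        show "vrun EE \<delta> s0 tr out val0 Cs' n = val" "moore_run s0 tr Cs' n = s"
          using val s by auto
      qed
      have v1: "vrun EE \<delta> s0 tr out val0 Cs' (Suc n) = delta_app \<delta> val (fst (out s) \<inter> EE) C"
        using ag by (simp add: Cs'_def)
      have m1: "moore_run s0 tr Cs' (Suc n) = tr s C"
        using ag by (simp add: Cs'_def)
      have "(delta_app \<delta> val (fst (out s) \<inter> EE) C, tr s C) \<in> R"
      proof -
        have "(vrun EE \<delta> s0 tr out val0 Cs' (Suc n), moore_run s0 tr Cs' (Suc n)) \<in> R"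
          unfolding R_def using Cs' by blast
        then show ?thesis by (simp only: v1 m1)
      qed
      moreover have "bigwedge (sat_trans val (delta_app \<delta> val (fst (out s) \<inter> EE) C))
          {p\<in>Pr. is_trans_pred p} {p\<in>snd (out (tr s C)). is_trans_pred p}"
        using good(2)[OF H Cs', of n] ag v1 m1 by simp
      ultimately show ?thesis by (simp add: Let_def)
    qed
    show "s \<in> S \<and> bigwedge (sat_state val) {p\<in>Pr. is_state_pred p} {p\<in>snd (out s). is_state_pred p} \<and>
        (\<forall>C. C \<subseteq> CC \<longrightarrow> (let valC = delta_app \<delta> val (fst (out s) \<inter> EE) C; sC = tr s C in
              bigwedge (sat_trans val valC) {p\<in>Pr. is_trans_pred p}
                       {p\<in>snd (out sC). is_trans_pred p} \<and>
              (valC, sC) \<in> R))"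
      using sS st rest by (intro conjI allI impI) auto
  qed
  moreover have "(val0, s0) \<in> R"
    unfolding R_def by (rule CollectI, rule exI[of _ "\<lambda>_. {}"], rule exI[of _ 0]) simp
  ultimately show "moore_concretisable EE CC Pr val0 \<delta> S s0 tr out"
    unfolding moore_concretisable_def conc_preceq_def by blast
qed

end
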